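(* There is a universal constant $C>0$ such that for every positive integer $T$, every $x \in \{0,1\}^T$ and every $p \in [0,1]^T$: (1) $\mathsf{CalDist}(x,p) \le \mathsf{LowerCalDist}(x,p) + C\sqrt{T}$; (2) $\mathsf{CalDist}(x,p) \le C\cdot \mathsf{LowerCalDist}(x,p) + C\, m$, where $m = |\{p_1, p_2, \ldots, p_T\}|$ is the number of distinct entries of $p$.
   Context: For $x \in \{0,1\}^T$, let $\mathcal{C}(x) = \{q \in [0,1]^T : \sum_{t=1}^T (x_t - q_t)\mathbf{1}[q_t = \alpha] = 0 \text{ for all } \alpha \in [0,1]\}$ (predictions perfectly calibrated for $x$). The calibration distance is $\mathsf{CalDist}(x,p) = \min_{q \in \mathcal{C}(x)} \|p-q\|_1$. Let $\underline{\mathcal{C}}(x)$ be the set of $T$-tuples $\mathcal{D} = (\mathcal{D}_1,\ldots,\mathcal{D}_T)$ of probability distributions, each with finite support contained in $[0,1]$, such that $\sum_{t=1}^T (x_t - \alpha)\mathcal{D}_t(\alpha) = 0$ for every $\alpha \in [0,1]$. For such $\mathcal{D}$ write $\|p - \mathcal{D}\|_1 = \sum_{t=1}^T \mathbb{E}_{q_t \sim \mathcal{D}_t}|p_t - q_t|$. The lower calibration distance is $\mathsf{LowerCalDist}(x,p) = \inf_{\mathcal{D} \in \underline{\mathcal{C}}(x)} \|p - \mathcal{D}\|_1$. *)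

theory Defs
  imports "HOL-Analysis.Analysis" "HOL-Probability.Probability"
begin

text \<open>Vectors in [0,1]^T and {0,1}^T are represented as functions nat => real,
  with coordinates t = 0, ..., T-1 (only these coordinates matter).\<close>

definition binary_vec :: "nat \<Rightarrow> (nat \<Rightarrow> real) \<Rightarrow> bool" where
  "binary_vec T x \<longleftrightarrow> (\<forall>t<T. x t \<in> {0, 1})"

definition unit_vec :: "nat \<Rightarrow> (nat \<Rightarrow> real) \<Rightarrow> bool" where
  "unit_vec T p \<longleftrightarrow> (\<forall>t<T. p t \<in> {0..1})"

definition calibrated_set :: "nat \<Rightarrow> (nat \<Rightarrow> real) \<Rightarrow> (nat \<Rightarrow> real) set" where
  "calibrated_set T x = {q. unit_vec T q \<and>
     (\<forall>\<alpha>::real. (\<Sum>t<T. (x t - q t) * (if q t = \<alpha> then 1 else 0)) = 0)}"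

definition l1_dist :: "nat \<Rightarrow> (nat \<Rightarrow> real) \<Rightarrow> (nat \<Rightarrow> real) \<Rightarrow> real" where
  "l1_dist T p q = (\<Sum>t<T. \<bar>p t - q t\<bar>)"

definition CalDist :: "nat \<Rightarrow> (nat \<Rightarrow> real) \<Rightarrow> (nat \<Rightarrow> real) \<Rightarrow> real" where
  "CalDist T x p = (INF q \<in> calibrated_set T x. l1_dist T p q)"

definition lower_calibrated_set :: "nat \<Rightarrow> (nat \<Rightarrow> real) \<Rightarrow> (nat \<Rightarrow> real pmf) set" where
  "lower_calibrated_set T x = {D. (\<forall>t<T. finite (set_pmf (D t)) \<and> set_pmf (D t) \<subseteq> {0..1}) \<and>
     (\<forall>\<alpha>::real. (\<Sum>t<T. (x t - \<alpha>) * pmf (D t) \<alpha>) = 0)}"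

definition l1_dist_dist :: "nat \<Rightarrow> (nat \<Rightarrow> real) \<Rightarrow> (nat \<Rightarrow> real pmf) \<Rightarrow> real" where
  "l1_dist_dist T p D = (\<Sum>t<T. measure_pmf.expectation (D t) (\<lambda>q. \<bar>p t - q\<bar>))"

definition LowerCalDist :: "nat \<Rightarrow> (nat \<Rightarrow> real) \<Rightarrow> (nat \<Rightarrow> real) \<Rightarrow> real" where
  "LowerCalDist T x p = (INF D \<in> lower_calibrated_set T x. l1_dist_dist T p D)"

end

theory Submission
  imports Defs
begin

lemma kernel_exists:
  fixes F :: "'i \<Rightarrow> 's \<Rightarrow> real"
  assumes "finite I" "finite S" "card I < card S"
  shows "\<exists>d. (\<forall>s. s \<notin> S \<longrightarrow> d s = 0) \<and> (\<exists>s\<in>S. d s \<noteq> 0) \<and>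
             (\<forall>i\<in>I. (\<Sum>s\<in>S. F i s * d s) = 0)"
  using assms
proof (induction I arbitrary: S F rule: finite_induct)
  case empty
  then obtain s0 where "s0 \<in> S" by fastforce
  then show ?case by (rule_tac x="\<lambda>s. if s = s0 then 1 else 0" in exI) auto
next
  case (insert i I)
  show ?case
  proof (cases "\<forall>s\<in>S. F i s = 0")
    case True
    have "card I < card S" using insert by simp
    from insert.IH[OF insert.prems(1) this, of F] obtain d where
      d: "(\<forall>s. s \<notin> S \<longrightarrow> d s = 0)" "(\<exists>s\<in>S. d s \<noteq> 0)" "(\<forall>i\<in>I. (\<Sum>s\<in>S. F i s * d s) = 0)"
      by blast
    show ?thesis using d True by (rule_tac x=d in exI) auto
  next
    case False
    then obtain s0 where s0: "s0 \<in> S" "F i s0 \<noteq> 0" by blast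
    define S' where "S' = S - {s0}"
    have fS': "finite S'" using insert by (simp add: S'_def)
    have cS': "card I < card S'" using insert s0 by (simp add: S'_def card_Diff_singleton)
    define F' where "F' = (\<lambda>j s. F j s - F j s0 * F i s / F i s0)"
    from insert.IH[OF fS' cS', of F'] obtain d' where
      d': "(\<forall>s. s \<notin> S' \<longrightarrow> d' s = 0)" "(\<exists>s\<in>S'. d' s \<noteq> 0)" "(\<forall>j\<in>I. (\<Sum>s\<in>S'. F' j s * d' s) = 0)"
      by blast
    define v where "v = - (\<Sum>s\<in>S'. F i s * d' s) / F i s0"
    define d where "d = d'(s0 := v)"
    have S: "S = insert s0 S'" using s0 by (auto simp: S'_def)
    have s0S': "s0 \<notin> S'" by (simp add: S'_def)
    have eqS': "(\<Sum>s\<in>S'. G s * d s) = (\<Sum>s\<in>S'. G s * d' s)" for G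
      using s0S' by (intro sum.cong) (auto simp: d_def)
    have sumS: "(\<Sum>s\<in>S. G s * d s) = G s0 * v + (\<Sum>s\<in>S'. G s * d' s)" for G
      unfolding S using s0S' fS' eqS' by (simp add: d_def)
    have "(\<Sum>s\<in>S. F j s * d s) = 0" if "j \<in> insert i I" for j
    proof (cases "j = i")
      case True
      then show ?thesis unfolding sumS v_def using s0 by simp
    next
      case False
      then have jI: "j \<in> I" using that by simp
      have "(\<Sum>s\<in>S'. F' j s * d' s) = (\<Sum>s\<in>S'. F j s * d' s) - F j s0 / F i s0 * (\<Sum>s\<in>S'. F i s * d' s)"
        unfolding F'_def by (simp add: algebra_simps sum_subtractf sum_distrib_left)
      then show ?thesis unfolding sumS v_def using d'(3) jI by (simp add: algebra_simps)
    qed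
    moreover have "\<forall>s. s \<notin> S \<longrightarrow> d s = 0" using d'(1) s0 by (auto simp: d_def S'_def)
    moreover have "\<exists>s\<in>S. d s \<noteq> 0" using d'(2) s0S' by (auto simp: d_def S)
    ultimately show ?thesis by blast
  qed
qed

locale core =
  fixes T :: nat and x p :: "nat \<Rightarrow> real" and k :: nat and a :: "nat \<Rightarrow> real"
  assumes bin: "binary_vec T x" and unit: "unit_vec T p" and a01: "\<forall>j<k. a j \<in> {0..1}"
begin

definition cls where "cls t = (p t, x t)"
definition K where "K = cls ` {..<T}"
definition n where "n r = card {t. t < T \<and> cls t = r}"
definition feas where "feas y \<longleftrightarrow> (\<forall>r\<in>K. \<forall>j<k. 0 \<le> y r j) \<and> (\<forall>r\<in>K. (\<Sum>j<k. y r j) = real (n r))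
   \<and> (\<forall>j<k. (\<Sum>r\<in>K. (snd r - a j) * y r j) = 0)"
definition cost where "cost y = (\<Sum>r\<in>K. \<Sum>j<k. y r j * \<bar>fst r - a j\<bar>)"
definition supp where "supp y = {z \<in> K \<times> {..<k}. y (fst z) (snd z) \<noteq> 0}"
definition cols where "cols y = {j. j<k \<and> (\<exists>r\<in>K. y r j \<noteq> 0)}"

lemma finK: "finite K" by (simp add: K_def)
lemma fin_supp: "finite (supp y)" 
  by (rule finite_subset[of _ "K \<times> {..<k}"]) (auto simp: supp_def finK)
lemma fin_cols: "finite (cols y)" by (simp add: cols_def)

lemma sum_over_S:
  fixes d :: "(real\<times>real)\<times>nat \<Rightarrow> real"
  assumes "\<forall>z. z \<notin> S \<longrightarrow> d z = 0" "S \<subseteq> K \<times> {..<k}"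
  shows "(\<Sum>z\<in>S. G z * d z) = (\<Sum>r\<in>K. \<Sum>j<k. G (r,j) * d (r,j))"
proof -
  have "(\<Sum>z\<in>S. G z * d z) = (\<Sum>z\<in>K \<times> {..<k}. G z * d z)"
    using assms by (intro sum.mono_neutral_left) (auto simp: finK)
  also have "\<dots> = (\<Sum>r\<in>K. \<Sum>j<k. G (r,j) * d (r,j))"
    by (simp add: sum.cartesian_product)
  finally show ?thesis .
qed

lemma vertex_step:
  assumes fy: "feas y" and big: "card (supp y) > card K + card (cols y)"
  shows "\<exists>y'. feas y' \<and> cost y' \<le> cost y \<and> card (supp y') < card (supp y)"
proof -
  define S where "S = supp y"
  define I :: "((real\<times>real) + nat) set" where "I = Inl ` K \<union> Inr ` cols y"
  have cI: "card I = card K + card (cols y)" unfolding I_def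
    by (subst card_Un_disjoint) (auto simp: finK fin_cols card_image)
  define F :: "((real\<times>real) + nat) \<Rightarrow> ((real\<times>real)\<times>nat) \<Rightarrow> real" where
    "F = (\<lambda>i z. case i of Inl r \<Rightarrow> (if fst z = r then 1 else 0)
                       | Inr j \<Rightarrow> (if snd z = j then snd (fst z) - a j else 0))"
  have "finite I" by (simp add: I_def finK fin_cols)
  from kernel_exists[OF this fin_supp, of y F] big cI obtain d where
    d0: "\<forall>s. s \<notin> S \<longrightarrow> d s = 0" and dnz: "\<exists>s\<in>S. d s \<noteq> 0" and
    deq: "\<forall>i\<in>I. (\<Sum>s\<in>S. F i s * d s) = 0" by (auto simp: S_def)
  have SK: "S \<subseteq> K \<times> {..<k}" by (auto simp: S_def supp_def)
  have row: "(\<Sum>j<k. d (r,j)) = 0" if "r \<in> K" for r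
  proof -
    have "0 = (\<Sum>s\<in>S. F (Inl r) s * d s)" using deq that by (auto simp: I_def)
    also have "\<dots> = (\<Sum>r'\<in>K. \<Sum>j<k. F (Inl r) (r',j) * d (r',j))" by (rule sum_over_S[OF d0 SK])
    also have "\<dots> = (\<Sum>r'\<in>K. if r' = r then (\<Sum>j<k. d (r,j)) else 0)"
      by (intro sum.cong) (auto simp: F_def)
    also have "\<dots> = (\<Sum>j<k. d (r,j))" using that finK by simp
    finally show ?thesis by simp
  qed
  have col: "(\<Sum>r\<in>K. (snd r - a j) * d (r,j)) = 0" if "j < k" for j
  proof (cases "j \<in> cols y")
    case True
    have "0 = (\<Sum>s\<in>S. F (Inr j) s * d s)" using deq True by (auto simp: I_def)
    also have "\<dots> = (\<Sum>r\<in>K. \<Sum>j'<k. F (Inr j) (r,j') * d (r,j'))" by (rule sum_over_S[OF d0 SK])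
    also have "\<dots> = (\<Sum>r\<in>K. (snd r - a j) * d (r,j))"
    proof (intro sum.cong refl)
      fix r assume "r \<in> K"
      have "F (Inr j) (r,j') * d (r,j') = (if j' = j then (snd r - a j) * d (r,j) else 0)" for j'
        by (simp add: F_def)
      then show "(\<Sum>j'<k. F (Inr j) (r,j') * d (r,j')) = (snd r - a j) * d (r,j)"
        using that by simp
    qed
    finally show ?thesis by simp
  next
    case False
    then have "\<forall>r\<in>K. d (r,j) = 0" using d0 that by (auto simp: S_def supp_def cols_def)
    then show ?thesis by simp
  qed
  define \<delta> where "\<delta> = (\<Sum>r\<in>K. \<Sum>j<k. d (r,j) * \<bar>fst r - a j\<bar>)"
  define e where "e = (\<lambda>r j. if \<delta> \<le> 0 then d (r,j) else - d (r,j))"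
  have e0: "e r j = 0" if "(r,j) \<notin> S" for r j proof - have "d (r,j) = 0" using d0 that by blast then show ?thesis by (simp add: e_def) qed
  have erow: "(\<Sum>j<k. e r j) = 0" if "r \<in> K" for r
    using row[OF that] by (cases "\<delta> \<le> 0") (simp_all add: e_def sum_negf)
  have ecol: "(\<Sum>r\<in>K. (snd r - a j) * e r j) = 0" if "j < k" for j
    using col[OF that] by (cases "\<delta> \<le> 0") (simp_all add: e_def sum_negf)
  have ecost: "(\<Sum>r\<in>K. \<Sum>j<k. e r j * \<bar>fst r - a j\<bar>) \<le> 0"
    by (cases "\<delta> \<le> 0") (simp_all add: e_def \<delta>_def[symmetric] sum_negf)
  have enz: "\<exists>z\<in>S. e (fst z) (snd z) \<noteq> 0" using dnz by (auto simp: e_def)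
  define N where "N = {z\<in>S. e (fst z) (snd z) < 0}"
  have "N \<noteq> {}"
  proof
    assume Ne: "N = {}"
    then have nn: "0 \<le> e r j" if "r \<in> K" "j < k" for r j
    proof (cases "(r,j) \<in> S")
      case True then have "(r,j) \<notin> N" using Ne by auto
      then show ?thesis using True by (simp add: N_def)
    next
      case False then show ?thesis using e0 by simp
    qed
    have "e r j = 0" if "r \<in> K" "j < k" for r j
    proof -
      have "(\<Sum>j<k. e r j) = 0" by (rule erow[OF that(1)])
      then have "\<forall>j\<in>{..<k}. e r j = 0" using nn[OF that(1)] by (subst (asm) sum_nonneg_eq_0_iff) auto
      then show ?thesis using that by auto
    qed
    then show False using enz SK by auto
  qed
  have finN: "finite N" using fin_supp[of y] unfolding N_def S_def by simp
  define g where "g = (\<lambda>z. y (fst z) (snd z) / (- e (fst z) (snd z)))"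
  define s where "s = Min (g ` N)"
  have "s \<in> g ` N" unfolding s_def using finN \<open>N \<noteq> {}\<close> by (intro Min_in) auto
  then obtain z0 where z0: "z0 \<in> N" "s = g z0" by auto
  have sle: "s \<le> g z" if "z \<in> N" for z using that finN by (simp add: s_def)
  have ypos: "y (fst z) (snd z) > 0" if "z \<in> S" for z
  proof -
    have "z \<in> K \<times> {..<k}" "y (fst z) (snd z) \<noteq> 0" using that by (auto simp: S_def supp_def)
    moreover have "\<forall>r\<in>K. \<forall>j<k. 0 \<le> y r j" using fy by (simp add: feas_def)
    ultimately show ?thesis by (metis SigmaE fst_conv lessThan_iff less_eq_real_def snd_conv)
  qed
  have s0: "s \<ge> 0"
  proof -
    have "y (fst z0) (snd z0) > 0" "e (fst z0) (snd z0) < 0" using z0 ypos by (auto simp: N_def)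
    then show ?thesis using z0 by (simp add: g_def divide_pos_neg less_imp_le)
  qed
  define y' where "y' = (\<lambda>r j. y r j + s * e r j)"
  have "feas y'"
    unfolding feas_def
  proof (intro conjI ballI allI impI)
    fix r j assume r: "r \<in> K" and j: "j < k"
    show "0 \<le> y' r j"
    proof (cases "e r j < 0")
      case True
      then have "(r,j) \<in> S" using e0[of r j] by (cases "(r,j) \<in> S") auto
      then have "(r,j) \<in> N" using True by (simp add: N_def)
      then have "s \<le> y r j / (- e r j)" using sle g_def by fastforce
      then have "s * (- e r j) \<le> y r j" using True by (metis mult.commute neg_0_less_iff_less pos_le_divide_eq)
      then show ?thesis by (simp add: y'_def)
    next
      case False
      then show ?thesis using fy r j s0 by (simp add: y'_def feas_def)
    qed
  next
    fix r assume r: "r \<in> K"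
    show "(\<Sum>j<k. y' r j) = real (n r)"
      using fy r erow[OF r] by (simp add: y'_def feas_def sum.distrib sum_distrib_left[symmetric])
  next
    fix j assume j: "j < k"
    have "(\<Sum>r\<in>K. (snd r - a j) * y' r j) = (\<Sum>r\<in>K. (snd r - a j) * y r j) + s * (\<Sum>r\<in>K. (snd r - a j) * e r j)"
      by (simp add: y'_def sum_distrib_left sum.distrib[symmetric] algebra_simps)
    then show "(\<Sum>r\<in>K. (snd r - a j) * y' r j) = 0" using fy j ecol[OF j] by (simp add: feas_def)
  qed
  moreover have "cost y' \<le> cost y"
  proof -
    have "cost y' = cost y + s * (\<Sum>r\<in>K. \<Sum>j<k. e r j * \<bar>fst r - a j\<bar>)"
      by (simp add: cost_def y'_def algebra_simps sum.distrib sum_distrib_left)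
    then show ?thesis using s0 ecost by (simp add: mult_nonneg_nonpos)
  qed
  moreover have "card (supp y') < card (supp y)"
  proof -
    have "supp y' \<subseteq> S - {z0}"
    proof
      fix z assume z: "z \<in> supp y'"
      obtain r j where zz: "z = (r,j)" by (cases z)
      have "(r,j) \<in> S"
      proof (rule ccontr)
        assume "(r,j) \<notin> S"
        then have "y r j = 0" "e r j = 0" using e0 z zz by (auto simp: S_def supp_def)
        then show False using z zz by (simp add: supp_def y'_def)
      qed
      moreover have "z \<noteq> z0"
      proof
        assume "z = z0"
        have "e (fst z0) (snd z0) < 0" using z0 by (simp add: N_def)
        then have "y' (fst z0) (snd z0) = 0" using z0(2) by (simp add: y'_def g_def)
        then show False using z \<open>z = z0\<close> by (simp add: supp_def)
      qed
      ultimately show "z \<in> S - {z0}" using zz by simp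
    qed
    moreover have "z0 \<in> S" using z0 by (simp add: N_def)
    ultimately show ?thesis unfolding S_def
      by (meson fin_supp card_Diff1_less card_mono finite_Diff le_less_trans)
  qed
  ultimately show ?thesis by blast
qed

lemma vertex:
  assumes "feas y"
  shows "\<exists>y'. feas y' \<and> cost y' \<le> cost y \<and> card (supp y') \<le> card K + card (cols y')"
  using assms
proof (induction "card (supp y)" arbitrary: y rule: less_induct)
  case less
  show ?case
  proof (cases "card (supp y) \<le> card K + card (cols y)")
    case True then show ?thesis using less.prems by blast
  next
    case False
    then obtain y1 where "feas y1" "cost y1 \<le> cost y" "card (supp y1) < card (supp y)"
      using vertex_step[OF less.prems] by auto
    with less.hyps[of y1] show ?thesis by force
  qed
qed

end

context core begin

definition P where "P y r j = (\<Sum>i<j. y r i)"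
definition c where "c y r j = nat \<lfloor>P y r j\<rfloor>"
definition yr where "yr y r j = real (c y r (Suc j)) - real (c y r j)"
definition Sc where "Sc y j = (\<Sum>r\<in>K. yr y r j)"
definition Ac where "Ac y j = (\<Sum>r\<in>K. snd r * yr y r j)"
definition a' where "a' y j = (if Sc y j = 0 then a j else Ac y j / Sc y j)"

lemma K_props: "r \<in> K \<Longrightarrow> snd r \<in> {0,1} \<and> fst r \<in> {0..1} \<and> n r \<ge> 1"
proof -
  assume "r \<in> K"
  then obtain t where t: "t < T" "r = cls t" by (auto simp: K_def)
  have "t \<in> {t. t < T \<and> cls t = r}" using t by simp
  moreover have "finite {t. t < T \<and> cls t = r}" by simp
  ultimately have "n r \<ge> 1" unfolding n_def by (metis One_nat_def Suc_leI card_gt_0_iff empty_iff)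
  then show ?thesis using t bin unit by (auto simp: cls_def binary_vec_def unit_vec_def)
qed

context
  fixes y assumes fy: "feas y"
begin

lemma y_nn: "r \<in> K \<Longrightarrow> j < k \<Longrightarrow> 0 \<le> y r j" using fy by (simp add: feas_def)
lemma y_row: "r \<in> K \<Longrightarrow> (\<Sum>j<k. y r j) = real (n r)" using fy by (simp add: feas_def)

lemma P_nn: "r \<in> K \<Longrightarrow> j \<le> k \<Longrightarrow> 0 \<le> P y r j"
  unfolding P_def by (rule sum_nonneg) (auto intro: y_nn)

lemma P_mono: "r \<in> K \<Longrightarrow> j \<le> j' \<Longrightarrow> j' \<le> k \<Longrightarrow> P y r j \<le> P y r j'"
  unfolding P_def by (rule sum_mono2) (auto intro: y_nn)

lemma c_0: "c y r 0 = 0" by (simp add: c_def P_def)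
lemma c_k: "r \<in> K \<Longrightarrow> c y r k = n r" by (simp add: c_def P_def y_row)
lemma c_mono: "r \<in> K \<Longrightarrow> j \<le> j' \<Longrightarrow> j' \<le> k \<Longrightarrow> c y r j \<le> c y r j'"
  unfolding c_def by (intro nat_mono floor_mono P_mono) auto
lemma c_real: "r \<in> K \<Longrightarrow> j \<le> k \<Longrightarrow> real (c y r j) = of_int \<lfloor>P y r j\<rfloor>"
  using P_nn by (simp add: c_def)

lemma yr_nn: "r \<in> K \<Longrightarrow> j < k \<Longrightarrow> 0 \<le> yr y r j"
  using c_mono[of r j "Suc j"] by (simp add: yr_def)

lemma yr_row: "r \<in> K \<Longrightarrow> (\<Sum>j<k. yr y r j) = real (n r)"
  unfolding yr_def by (subst sum_lessThan_telescope) (simp add: c_0 c_k)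

lemma yr_close: "r \<in> K \<Longrightarrow> j < k \<Longrightarrow> \<bar>yr y r j - y r j\<bar> \<le> 1"
proof -
  assume r: "r \<in> K" and j: "j < k"
  have "P y r (Suc j) = P y r j + y r j" by (simp add: P_def)
  moreover have "yr y r j = of_int \<lfloor>P y r (Suc j)\<rfloor> - of_int \<lfloor>P y r j\<rfloor>"
    using r j by (simp add: yr_def c_real)
  moreover have "of_int \<lfloor>P y r (Suc j)\<rfloor> \<le> P y r (Suc j)" "P y r (Suc j) < of_int \<lfloor>P y r (Suc j)\<rfloor> + 1"
    "of_int \<lfloor>P y r j\<rfloor> \<le> P y r j" "P y r j < of_int \<lfloor>P y r j\<rfloor> + 1" by linarith+
  ultimately show ?thesis by linarith
qed

lemma yr_zero: "y r j = 0 \<Longrightarrow> yr y r j = 0"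
  by (simp add: yr_def c_def P_def)

lemma row_loss:
  assumes r: "r \<in> K"
  shows "(\<Sum>j<k. \<bar>yr y r j - y r j\<bar>) \<le> 2 * (real (card {j. j<k \<and> y r j \<noteq> 0}) - 1)"
proof -
  define Z where "Z = {j. j<k \<and> y r j \<noteq> 0}"
  have fZ: "finite Z" by (simp add: Z_def)
  have sumZ: "(\<Sum>j<k. \<bar>yr y r j - y r j\<bar>) = (\<Sum>j\<in>Z. \<bar>yr y r j - y r j\<bar>)"
    by (rule sum.mono_neutral_right) (auto simp: Z_def yr_zero)
  have "Z \<noteq> {}"
  proof
    assume "Z = {}"
    then have "(\<Sum>j<k. y r j) = 0" by (intro sum.neutral) (auto simp: Z_def)
    then show False using y_row[OF r] K_props[OF r] by simp
  qed
  then have "card Z \<ge> 1" using fZ by (simp add: Suc_le_eq card_gt_0_iff)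
  show ?thesis
  proof (cases "card Z \<ge> 2")
    case True
    have "(\<Sum>j\<in>Z. \<bar>yr y r j - y r j\<bar>) \<le> real (card Z) * 1"
      by (rule sum_bounded_above) (auto simp: Z_def intro: yr_close[OF r])
    moreover have "real (card Z) \<le> 2 * (real (card Z) - 1)" using True by simp
    ultimately show ?thesis using sumZ unfolding Z_def[symmetric] by linarith
  next
    case False
    with \<open>card Z \<ge> 1\<close> have "card Z = 1" by simp
    then obtain j0 where Z1: "Z = {j0}" by (rule card_1_singletonE)
    then have j0: "j0 < k" by (auto simp: Z_def)
    have yz: "y r j = 0" if "j < k" "j \<noteq> j0" for j using Z1 that by (auto simp: Z_def)
    have Pform: "P y r j = (if j0 < j then y r j0 else 0)" if "j \<le> k" for j
    proof -
      have "P y r j = (\<Sum>i<j. if i = j0 then y r j0 else 0)"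
        unfolding P_def using that yz by (intro sum.cong) auto
      then show ?thesis by simp
    qed
    have "P y r k = real (n r)" using y_row[OF r] by (simp add: P_def)
    then have yj0: "y r j0 = real (n r)" using Pform[of k] j0 by simp
    have "yr y r j = y r j" if "j < k" for j
    proof -
      have "yr y r j = of_int \<lfloor>P y r (Suc j)\<rfloor> - of_int \<lfloor>P y r j\<rfloor>"
        using r that by (simp add: yr_def c_real)
      also have "\<dots> = P y r (Suc j) - P y r j"
        using that by (simp add: Pform yj0)
      also have "\<dots> = y r j" by (simp add: P_def)
      finally show ?thesis .
    qed
    then have "(\<Sum>j<k. \<bar>yr y r j - y r j\<bar>) = 0" by simp
    then show ?thesis using \<open>card Z = 1\<close> unfolding Z_def by simp
  qed
qed


lemma Ac_bounds: "j < k \<Longrightarrow> 0 \<le> Ac y j \<and> Ac y j \<le> Sc y j"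
proof -
  assume j: "j < k"
  have "0 \<le> snd r * yr y r j \<and> snd r * yr y r j \<le> yr y r j" if "r \<in> K" for r
    using K_props[OF that] yr_nn[OF that j] by auto
  then show ?thesis unfolding Ac_def Sc_def by (auto intro: sum_nonneg sum_mono)
qed

lemma a'_01: "j < k \<Longrightarrow> a' y j \<in> {0..1}"
  using Ac_bounds[of j] a01 by (auto simp: a'_def field_simps)

lemma col_cal: "j < k \<Longrightarrow> (\<Sum>r\<in>K. (snd r - a' y j) * yr y r j) = 0"
proof -
  assume j: "j < k"
  have "(\<Sum>r\<in>K. (snd r - a' y j) * yr y r j) = Ac y j - a' y j * Sc y j"
    by (simp add: Ac_def Sc_def algebra_simps sum_subtractf sum_distrib_left)
  also have "\<dots> = 0"
  proof (cases "Sc y j = 0")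
    case True
    then have "Ac y j = 0" using Ac_bounds[OF j] by simp
    then show ?thesis using True by simp
  next
    case False then show ?thesis by (simp add: a'_def)
  qed
  finally show ?thesis .
qed

lemma shift: "j < k \<Longrightarrow> Sc y j * \<bar>a j - a' y j\<bar> \<le> (\<Sum>r\<in>K. \<bar>yr y r j - y r j\<bar>)"
proof -
  assume j: "j < k"
  show ?thesis
  proof (cases "Sc y j = 0")
    case True then show ?thesis by (simp add: sum_nonneg)
  next
    case False
    have Spos: "Sc y j > 0" using False Ac_bounds[OF j] by linarith
    have "Sc y j * \<bar>a j - a' y j\<bar> = \<bar>a j * Sc y j - Ac y j\<bar>"
    proof -
      have "Sc y j * (a j - a' y j) = a j * Sc y j - Ac y j" using Spos by (simp add: a'_def right_diff_distrib)
      moreover have "Sc y j * \<bar>a j - a' y j\<bar> = \<bar>Sc y j * (a j - a' y j)\<bar>" using Spos by (simp add: abs_mult)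
      ultimately show ?thesis by simp
    qed
    also have "a j * Sc y j - Ac y j = (\<Sum>r\<in>K. (a j - snd r) * yr y r j)"
      by (simp add: Ac_def Sc_def algebra_simps sum_subtractf sum_distrib_left)
    also have "\<dots> = (\<Sum>r\<in>K. (a j - snd r) * (yr y r j - y r j))"
    proof -
      have "(\<Sum>r\<in>K. (snd r - a j) * y r j) = 0" using fy j by (simp add: feas_def)
      then have "(\<Sum>r\<in>K. (a j - snd r) * y r j) = 0"
        by (simp add: algebra_simps sum_subtractf)
      moreover have "(\<Sum>r\<in>K. (a j - snd r) * (yr y r j - y r j)) = (\<Sum>r\<in>K. (a j - snd r) * yr y r j) - (\<Sum>r\<in>K. (a j - snd r) * y r j)"
        by (simp add: right_diff_distrib sum_subtractf)
      ultimately show ?thesis by simp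
    qed
    also have "\<bar>\<dots>\<bar> \<le> (\<Sum>r\<in>K. \<bar>(a j - snd r) * (yr y r j - y r j)\<bar>)" by (rule sum_abs)
    also have "\<dots> \<le> (\<Sum>r\<in>K. \<bar>yr y r j - y r j\<bar>)"
    proof (rule sum_mono)
      fix r assume r: "r \<in> K"
      have "\<bar>a j - snd r\<bar> \<le> 1" using K_props[OF r] a01 j by auto
      then show "\<bar>(a j - snd r) * (yr y r j - y r j)\<bar> \<le> \<bar>yr y r j - y r j\<bar>"
        by (simp add: abs_mult mult_left_le_one_le)
    qed
    finally show ?thesis .
  qed
qed

lemma rcost:
  "(\<Sum>r\<in>K. \<Sum>j<k. yr y r j * \<bar>fst r - a' y j\<bar>) \<le> cost y + 2 * (\<Sum>r\<in>K. \<Sum>j<k. \<bar>yr y r j - y r j\<bar>)"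
proof -
  let ?L = "(\<Sum>r\<in>K. \<Sum>j<k. \<bar>yr y r j - y r j\<bar>)"
  have pt: "yr y r j * \<bar>fst r - a' y j\<bar> \<le> (y r j * \<bar>fst r - a j\<bar> + \<bar>yr y r j - y r j\<bar>) + yr y r j * \<bar>a j - a' y j\<bar>"
    if r: "r \<in> K" and j: "j < k" for r j
  proof -
    have h1: "\<bar>fst r - a j\<bar> \<le> 1" using K_props[OF r] a01 j by auto
    have yn: "0 \<le> yr y r j" using yr_nn[OF r j] .
    have "\<bar>fst r - a' y j\<bar> \<le> \<bar>fst r - a j\<bar> + \<bar>a j - a' y j\<bar>" by linarith
    then have A: "yr y r j * \<bar>fst r - a' y j\<bar> \<le> yr y r j * \<bar>fst r - a j\<bar> + yr y r j * \<bar>a j - a' y j\<bar>"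
      using yn by (metis distrib_left mult_left_mono)
    have B: "(yr y r j - y r j) * \<bar>fst r - a j\<bar> \<le> \<bar>yr y r j - y r j\<bar>"
    proof -
      have "(yr y r j - y r j) * \<bar>fst r - a j\<bar> \<le> \<bar>(yr y r j - y r j) * \<bar>fst r - a j\<bar>\<bar>" by (rule abs_ge_self)
      also have "\<dots> \<le> \<bar>yr y r j - y r j\<bar>" unfolding abs_mult abs_abs using h1 by (intro mult_right_le_one_le) auto
      finally show ?thesis .
    qed
    have C: "yr y r j * \<bar>fst r - a j\<bar> = y r j * \<bar>fst r - a j\<bar> + (yr y r j - y r j) * \<bar>fst r - a j\<bar>"
      by (simp add: left_diff_distrib)
    show ?thesis using A B C by linarith
  qed
  have "(\<Sum>r\<in>K. \<Sum>j<k. yr y r j * \<bar>fst r - a' y j\<bar>) \<le>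
        (\<Sum>r\<in>K. \<Sum>j<k. (y r j * \<bar>fst r - a j\<bar> + \<bar>yr y r j - y r j\<bar>) + yr y r j * \<bar>a j - a' y j\<bar>)"
    by (intro sum_mono pt) auto
  also have "\<dots> = cost y + ?L + (\<Sum>r\<in>K. \<Sum>j<k. yr y r j * \<bar>a j - a' y j\<bar>)"
    by (simp only: cost_def sum.distrib)
  also have "(\<Sum>r\<in>K. \<Sum>j<k. yr y r j * \<bar>a j - a' y j\<bar>) = (\<Sum>j<k. \<Sum>r\<in>K. yr y r j * \<bar>a j - a' y j\<bar>)"
    by (rule sum.swap)
  also have "\<dots> = (\<Sum>j<k. Sc y j * \<bar>a j - a' y j\<bar>)"
    by (simp only: Sc_def sum_distrib_right)
  also have "\<dots> \<le> (\<Sum>j<k. \<Sum>r\<in>K. \<bar>yr y r j - y r j\<bar>)"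
    by (intro sum_mono shift) auto
  also have "\<dots> = ?L" by (rule sum.swap)
  finally show ?thesis by simp
qed

lemma card_supp: "card (supp y) = (\<Sum>r\<in>K. card {j. j<k \<and> y r j \<noteq> 0})"
proof -
  have "supp y = Sigma K (\<lambda>r. {j. j<k \<and> y r j \<noteq> 0})" by (auto simp: supp_def)
  then show ?thesis by (simp add: finK)
qed

lemma total_loss:
  "(\<Sum>r\<in>K. \<Sum>j<k. \<bar>yr y r j - y r j\<bar>) \<le> 2 * (real (card (supp y)) - real (card K))"
proof -
  have "(\<Sum>r\<in>K. \<Sum>j<k. \<bar>yr y r j - y r j\<bar>) \<le> (\<Sum>r\<in>K. 2 * (real (card {j. j<k \<and> y r j \<noteq> 0}) - 1))"
    by (intro sum_mono row_loss)
  also have "\<dots> = 2 * (real (card (supp y)) - real (card K))"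
    by (simp add: card_supp sum_subtractf sum_distrib_left)
  finally show ?thesis .
qed

end
end

context core begin

definition Cr where "Cr r = {t. t < T \<and> cls t = r}"
definition fr where "fr r = (SOME f. bij_betw f (Cr r) {0..<n r})"
definition sg where "sg y r i = (LEAST j. i < c y r (Suc j))"
definition sig where "sig y t = sg y (cls t) (fr (cls t) t)"

lemma fr_bij: "bij_betw (fr r) (Cr r) {0..<n r}"
proof -
  have "finite (Cr r)" by (simp add: Cr_def)
  then have "\<exists>f. bij_betw f (Cr r) {0..<n r}" using ex_bij_betw_finite_nat unfolding Cr_def n_def by blast
  then show ?thesis unfolding fr_def by (rule someI_ex)
qed

lemma card_pre_bij:
  assumes "bij_betw f A B"
  shows "card {a \<in> A. f a \<in> X} = card (B \<inter> X)"
proof -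
  have "inj_on f {a \<in> A. f a \<in> X}" using assms by (auto simp: bij_betw_def intro: inj_on_subset)
  then have "card {a \<in> A. f a \<in> X} = card (f ` {a \<in> A. f a \<in> X})" by (simp add: card_image)
  also have "f ` {a \<in> A. f a \<in> X} = B \<inter> X" using assms by (auto simp: bij_betw_def)
  finally show ?thesis .
qed

context
  fixes y assumes fy: "feas y"
begin

lemma sg_props:
  assumes r: "r \<in> K" and i: "i < n r"
  shows "sg y r i < k \<and> c y r (sg y r i) \<le> i \<and> i < c y r (Suc (sg y r i))"
proof -
  have kpos: "k > 0"
  proof (rule ccontr)
    assume "\<not> k > 0" then have "k = 0" by simp
    then have "n r = 0" using c_k[OF fy r] c_0[OF fy] by simp
    then show False using i by simp
  qed
  have ex: "i < c y r (Suc (k - 1))" using kpos i c_k[OF fy r] by simp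
  have A: "i < c y r (Suc (sg y r i))" unfolding sg_def by (rule LeastI[where P="\<lambda>j. i < c y r (Suc j)", OF ex])
  have B: "sg y r i \<le> k - 1" unfolding sg_def by (rule Least_le[where P="\<lambda>j. i < c y r (Suc j)", OF ex])
  have C: "c y r (sg y r i) \<le> i"
  proof (cases "sg y r i")
    case 0 then show ?thesis by (simp add: c_0[OF fy])
  next
    case (Suc j')
    then have "j' < sg y r i" by simp
    then have "\<not> i < c y r (Suc j')" unfolding sg_def by (rule not_less_Least)
    then show ?thesis using Suc by simp
  qed
  show ?thesis using A B C kpos by simp
qed

lemma sg_char:
  assumes r: "r \<in> K" and i: "i < n r" and j: "j < k"
  shows "sg y r i = j \<longleftrightarrow> c y r j \<le> i \<and> i < c y r (Suc j)"
proof
  assume "sg y r i = j" then show "c y r j \<le> i \<and> i < c y r (Suc j)" using sg_props[OF r i] by simp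
next
  assume h: "c y r j \<le> i \<and> i < c y r (Suc j)"
  have le: "sg y r i \<le> j" unfolding sg_def using h by (intro Least_le) simp
  show "sg y r i = j"
  proof (rule ccontr)
    assume "sg y r i \<noteq> j"
    then have "Suc (sg y r i) \<le> j" using le by simp
    then have "c y r (Suc (sg y r i)) \<le> c y r j" using c_mono[OF fy r] j by simp
    then show False using h sg_props[OF r i] by simp
  qed
qed

lemma fr_in: "t < T \<Longrightarrow> fr (cls t) t < n (cls t)"
  using fr_bij[of "cls t"] by (auto simp: bij_betw_def Cr_def)

lemma clsK: "t < T \<Longrightarrow> cls t \<in> K" by (simp add: K_def)

lemma sig_lt: "t < T \<Longrightarrow> sig y t < k"
  unfolding sig_def using sg_props[OF clsK fr_in] by simp

lemma count:
  assumes r: "r \<in> K" and j: "j < k"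
  shows "card {t. t < T \<and> cls t = r \<and> sig y t = j} = c y r (Suc j) - c y r j"
proof -
  have "{t. t < T \<and> cls t = r \<and> sig y t = j} = {t \<in> Cr r. fr r t \<in> {c y r j..<c y r (Suc j)}}"
  proof (intro set_eqI iffI)
    fix t assume "t \<in> {t. t < T \<and> cls t = r \<and> sig y t = j}"
    then show "t \<in> {t \<in> Cr r. fr r t \<in> {c y r j..<c y r (Suc j)}}"
      using sg_char[OF r _ j] fr_in by (auto simp: Cr_def sig_def)
  next
    fix t assume "t \<in> {t \<in> Cr r. fr r t \<in> {c y r j..<c y r (Suc j)}}"
    then show "t \<in> {t. t < T \<and> cls t = r \<and> sig y t = j}"
      using sg_char[OF r _ j] fr_in by (auto simp: Cr_def sig_def)
  qed
  then have "card {t. t < T \<and> cls t = r \<and> sig y t = j} = card {t \<in> Cr r. fr r t \<in> {c y r j..<c y r (Suc j)}}"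
    by (simp only:)
  also have "\<dots> = card ({0..<n r} \<inter> {c y r j..<c y r (Suc j)})"
    by (rule card_pre_bij[OF fr_bij])
  also have "{0..<n r} \<inter> {c y r j..<c y r (Suc j)} = {c y r j..<c y r (Suc j)}"
    using c_mono[OF fy r, of "Suc j" k] c_k[OF fy r] j by auto
  finally show ?thesis by simp
qed

lemma regroup:
  "(\<Sum>t<T. h (cls t) (sig y t)) = (\<Sum>r\<in>K. \<Sum>j<k. yr y r j * h r j)"
proof -
  let ?g = "\<lambda>t. (cls t, sig y t)"
  have "(\<Sum>t<T. h (cls t) (sig y t)) = (\<Sum>z\<in>K \<times> {..<k}. \<Sum>t\<in>{t. t \<in> {..<T} \<and> ?g t = z}. h (cls t) (sig y t))"
    by (rule sum.group[symmetric]) (auto simp: finK clsK sig_lt)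
  also have "\<dots> = (\<Sum>z\<in>K \<times> {..<k}. real (card {t. t < T \<and> cls t = fst z \<and> sig y t = snd z}) * h (fst z) (snd z))"
  proof (intro sum.cong refl)
    fix z assume "z \<in> K \<times> {..<k}"
    obtain r0 j0 where z: "z = (r0, j0)" by (cases z)
    have e: "{t. t \<in> {..<T} \<and> ?g t = z} = {t. t < T \<and> cls t = fst z \<and> sig y t = snd z}" using z by auto
    have "(\<Sum>t\<in>{t. t \<in> {..<T} \<and> ?g t = z}. h (cls t) (sig y t)) = (\<Sum>t\<in>{t. t \<in> {..<T} \<and> ?g t = z}. h (fst z) (snd z))"
      by (intro sum.cong) auto
    then show "(\<Sum>t\<in>{t. t \<in> {..<T} \<and> ?g t = z}. h (cls t) (sig y t)) = real (card {t. t < T \<and> cls t = fst z \<and> sig y t = snd z}) * h (fst z) (snd z)"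
      unfolding e by simp
  qed
  also have "\<dots> = (\<Sum>r\<in>K. \<Sum>j<k. real (card {t. t < T \<and> cls t = r \<and> sig y t = j}) * h r j)"
    by (simp add: sum.cartesian_product split_def)
  also have "\<dots> = (\<Sum>r\<in>K. \<Sum>j<k. yr y r j * h r j)"
  proof (intro sum.cong refl)
    fix r j assume r: "r \<in> K" and j: "j \<in> {..<k}"
    have "c y r j \<le> c y r (Suc j)" using c_mono[OF fy r] j by simp
    then show "real (card {t. t < T \<and> cls t = r \<and> sig y t = j}) * h r j = yr y r j * h r j"
      using count[OF r] j by (simp add: yr_def of_nat_diff)
  qed
  finally show ?thesis .
qed

lemma round_main:
  "\<exists>q\<in>calibrated_set T x. l1_dist T p q \<le> cost y + 4 * (real (card (supp y)) - real (card K))"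
proof -
  define q where "q t = a' y (sig y t)" for t
  have "unit_vec T q" unfolding unit_vec_def q_def using a'_01[OF fy] sig_lt by blast
  moreover have "(\<Sum>t<T. (x t - q t) * (if q t = \<alpha> then 1 else 0)) = 0" for \<alpha>
  proof -
    have "(\<Sum>t<T. (x t - q t) * (if q t = \<alpha> then 1 else 0)) =
          (\<Sum>t<T. (\<lambda>r j. (snd r - a' y j) * (if a' y j = \<alpha> then 1 else 0)) (cls t) (sig y t))"
      by (simp add: q_def cls_def)
    also have "\<dots> = (\<Sum>r\<in>K. \<Sum>j<k. yr y r j * ((snd r - a' y j) * (if a' y j = \<alpha> then 1 else 0)))"
      by (rule regroup)
    also have "\<dots> = (\<Sum>j<k. (if a' y j = \<alpha> then 1 else 0) * (\<Sum>r\<in>K. (snd r - a' y j) * yr y r j))"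
      by (subst sum.swap) (simp add: sum_distrib_left algebra_simps)
    also have "\<dots> = 0" using col_cal[OF fy] by simp
    finally show ?thesis .
  qed
  ultimately have qc: "q \<in> calibrated_set T x" by (simp add: calibrated_set_def)
  have "l1_dist T p q = (\<Sum>t<T. (\<lambda>r j. \<bar>fst r - a' y j\<bar>) (cls t) (sig y t))"
    by (simp add: l1_dist_def q_def cls_def)
  also have "\<dots> = (\<Sum>r\<in>K. \<Sum>j<k. yr y r j * \<bar>fst r - a' y j\<bar>)" by (rule regroup)
  also have "\<dots> \<le> cost y + 2 * (\<Sum>r\<in>K. \<Sum>j<k. \<bar>yr y r j - y r j\<bar>)" by (rule rcost[OF fy])
  also have "\<dots> \<le> cost y + 4 * (real (card (supp y)) - real (card K))"
    using total_loss[OF fy] by linarith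
  finally show ?thesis using qc by blast
qed

end
end

context core begin

lemma cols_le_k: "card (cols y) \<le> k"
  by (rule order_trans[OF card_mono[of "{..<k}"]]) (auto simp: cols_def)

lemma col_two:
  assumes fy: "feas y" and j: "j \<in> cols y" and aj: "a j \<notin> {0,1}"
  shows "card {r\<in>K. y r j \<noteq> 0} \<ge> 2"
proof (rule ccontr)
  assume "\<not> ?thesis"
  moreover have "{r\<in>K. y r j \<noteq> 0} \<noteq> {}" using j by (auto simp: cols_def)
  moreover have "finite {r\<in>K. y r j \<noteq> 0}" using finK by simp
  ultimately have "card {r\<in>K. y r j \<noteq> 0} > 0" "card {r\<in>K. y r j \<noteq> 0} < 2"
    by (simp_all only: card_gt_0_iff not_le) simp
  then have "card {r\<in>K. y r j \<noteq> 0} = 1" by linarith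
  then obtain r0 where r0: "{r\<in>K. y r j \<noteq> 0} = {r0}" by (rule card_1_singletonE)
  have jk: "j < k" using j by (simp add: cols_def)
  have "0 = (\<Sum>r\<in>K. (snd r - a j) * y r j)" using fy jk by (simp add: feas_def)
  also have "\<dots> = (\<Sum>r\<in>K. if r = r0 then (snd r0 - a j) * y r0 j else 0)"
  proof (intro sum.cong refl)
    fix r assume r: "r \<in> K"
    show "(snd r - a j) * y r j = (if r = r0 then (snd r0 - a j) * y r0 j else 0)"
    proof (cases "r = r0")
      case False then have "y r j = 0" using r0 r by blast
      then show ?thesis using False by simp
    qed simp
  qed
  also have "\<dots> = (snd r0 - a j) * y r0 j" using r0 finK by auto
  finally have "(snd r0 - a j) * y r0 j = 0" by simp
  moreover have "y r0 j \<noteq> 0" "r0 \<in> K" using r0 by auto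
  ultimately have "a j = snd r0" by simp
  then show False using aj K_props[OF \<open>r0 \<in> K\<close>] by auto
qed

lemma col_one:
  assumes j: "j \<in> cols y"
  shows "card {r\<in>K. y r j \<noteq> 0} \<ge> 1"
proof -
  have "{r\<in>K. y r j \<noteq> 0} \<noteq> {}" using j by (auto simp: cols_def)
  then show ?thesis using finK by (simp add: card_gt_0_iff Suc_le_eq)
qed

lemma card_supp_cols: "card (supp y) = (\<Sum>j\<in>cols y. card {r\<in>K. y r j \<noteq> 0})"
proof -
  have "(\<lambda>(r,j). (j,r)) ` supp y = Sigma (cols y) (\<lambda>j. {r\<in>K. y r j \<noteq> 0})"
    by (auto simp: supp_def cols_def image_iff)
  moreover have "inj_on (\<lambda>(r,j). (j,r)) (supp y)" by (auto simp: inj_on_def)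
  ultimately have "card (supp y) = card (Sigma (cols y) (\<lambda>j. {r\<in>K. y r j \<noteq> 0}))"
    by (metis card_image)
  also have "\<dots> = (\<Sum>j\<in>cols y. card {r\<in>K. y r j \<noteq> 0})"
    by (subst card_SigmaI) (auto simp: fin_cols finK)
  finally show ?thesis .
qed

lemma cols_bound:
  assumes fy: "feas y" and inj: "inj_on a {..<k}" and sb: "card (supp y) \<le> card K + card (cols y)"
  shows "card (cols y) \<le> card K + 2"
proof -
  define E where "E = {j\<in>cols y. a j \<in> {0,1}}"
  have "card E \<le> card {0::real,1}"
    by (rule card_inj_on_le[OF inj_on_subset[OF inj]]) (auto simp: E_def cols_def)
  then have E2: "card E \<le> 2" by simp
  have fE: "finite E" using fin_cols[of y] unfolding E_def by simp
  have "(\<Sum>j\<in>cols y. card {r\<in>K. y r j \<noteq> 0}) \<ge> (\<Sum>j\<in>cols y. (if j \<in> E then 1 else 2))"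
    using col_one col_two[OF fy] by (intro sum_mono) (auto simp: E_def)
  moreover have "(\<Sum>j\<in>cols y. (if j \<in> E then 1 else 2::nat)) + card E = 2 * card (cols y)"
  proof -
    have "E \<subseteq> cols y" by (auto simp: E_def)
    have "(\<Sum>j\<in>cols y. (if j \<in> E then 1 else 2::nat)) + (\<Sum>j\<in>cols y. (if j \<in> E then 1 else 0)) = (\<Sum>j\<in>cols y. 2)"
      by (subst sum.distrib[symmetric]) (intro sum.cong, auto)
    moreover have "(\<Sum>j\<in>cols y. (if j \<in> E then 1 else 0::nat)) = card E"
    proof -
      have "(\<Sum>j\<in>cols y. (if j \<in> E then 1 else 0::nat)) = (\<Sum>j\<in>{j\<in>cols y. j \<in> E}. 1)"
        using fin_cols[of y] by (subst sum.inter_filter[symmetric]) (simp_all only:)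
      also have "{j\<in>cols y. j \<in> E} = E" using \<open>E \<subseteq> cols y\<close> by auto
      finally show ?thesis by simp
    qed
    ultimately show ?thesis by simp
  qed
  ultimately show ?thesis using sb card_supp_cols[of y] E2 by linarith
qed

lemma rounding:
  assumes fy: "feas y"
  shows "\<exists>q\<in>calibrated_set T x. l1_dist T p q \<le> cost y + 4 * real k \<and>
           (inj_on a {..<k} \<longrightarrow> l1_dist T p q \<le> cost y + 4 * (real (card K) + 2))"
proof -
  obtain y' where y': "feas y'" "cost y' \<le> cost y" "card (supp y') \<le> card K + card (cols y')"
    using vertex[OF fy] by blast
  obtain q where q: "q \<in> calibrated_set T x" "l1_dist T p q \<le> cost y' + 4 * (real (card (supp y')) - real (card K))"
    using round_main[OF y'(1)] by blast
  have "real (card (supp y')) \<le> real (card K) + real (card (cols y'))" using y'(3) by (metis of_nat_add of_nat_le_iff)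
  then have "4 * (real (card (supp y')) - real (card K)) \<le> 4 * real (card (cols y'))" by simp
  then have "l1_dist T p q \<le> cost y + 4 * real (card (cols y'))" using q(2) y'(2) by linarith
  moreover have "real (card (cols y')) \<le> real k" using cols_le_k by simp
  moreover have "inj_on a {..<k} \<Longrightarrow> real (card (cols y')) \<le> real (card K) + 2"
    using cols_bound[OF y'(1) _ y'(3)] by linarith
  ultimately show ?thesis using q(1) by (intro bexI[of _ q]) auto
qed

end

lemma expect_fin:
  assumes "finite V" "set_pmf M \<subseteq> V"
  shows "measure_pmf.expectation M f = (\<Sum>a\<in>V. pmf M a * f a)"
  using assms by (subst integral_measure_pmf_real[of V]) (auto simp: mult.commute)

lemma merge:
  fixes T :: nat and x p :: "nat \<Rightarrow> real" and D :: "nat \<Rightarrow> real pmf" and g :: "real \<Rightarrow> nat"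
  assumes bin: "binary_vec T x" and unit: "unit_vec T p" and D: "D \<in> lower_calibrated_set T x"
    and V: "V = (\<Union>t<T. set_pmf (D t))" and gk: "\<forall>\<alpha>\<in>V. g \<alpha> < k"
  defines "w \<equiv> \<lambda>j. \<Sum>t<T. \<Sum>\<alpha>\<in>{\<alpha>\<in>V. g \<alpha> = j}. pmf (D t) \<alpha>"
    and "num \<equiv> \<lambda>j. \<Sum>t<T. \<Sum>\<alpha>\<in>{\<alpha>\<in>V. g \<alpha> = j}. \<alpha> * pmf (D t) \<alpha>"
  defines "\<beta> \<equiv> \<lambda>j. if w j = 0 then 0 else num j / w j"
    and "y \<equiv> \<lambda>r j. \<Sum>t\<in>{t. t<T \<and> (p t, x t) = r}. \<Sum>\<alpha>\<in>{\<alpha>\<in>V. g \<alpha> = j}. pmf (D t) \<alpha>"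
  shows "(\<forall>j. \<beta> j \<in> {0..1}) \<and> core.feas T x p k \<beta> y \<and>
     core.cost T x p k \<beta> y \<le> l1_dist_dist T p D + (\<Sum>t<T. \<Sum>\<alpha>\<in>V. pmf (D t) \<alpha> * \<bar>\<alpha> - \<beta> (g \<alpha>)\<bar>)"
proof -
  have finV: "finite V" using D V by (auto simp: lower_calibrated_set_def)
  have V01: "V \<subseteq> {0..1}" using D V by (auto simp: lower_calibrated_set_def)
  have suppV: "set_pmf (D t) \<subseteq> V" if "t < T" for t using V that by auto
  have cal: "(\<Sum>t<T. (x t - \<alpha>) * pmf (D t) \<alpha>) = 0" for \<alpha>
    using D by (simp add: lower_calibrated_set_def)
  have numw: "0 \<le> num j \<and> num j \<le> w j" for j
    unfolding num_def w_def using V01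
    by (auto intro!: sum_nonneg sum_mono mult_nonneg_nonneg mult_left_le_one_le simp: subset_iff)
  have b01: "\<forall>j. \<beta> j \<in> {0..1}"
  proof
    fix j show "\<beta> j \<in> {0..1}"
      using numw[of j] by (cases "w j = 0") (auto simp: \<beta>_def divide_le_eq_1)
  qed
  interpret core T x p k \<beta> using bin unit b01 by unfold_locales auto
  have G1: "(\<Sum>j<k. \<Sum>\<alpha>\<in>{\<alpha>\<in>V. g \<alpha> = j}. F \<alpha>) = (\<Sum>\<alpha>\<in>V. F \<alpha>)" for F :: "real \<Rightarrow> real"
    using sum.group[of V "{..<k}" g F] finV gk by auto
  have G2: "(\<Sum>r\<in>K. \<Sum>t\<in>{t. t<T \<and> (p t, x t) = r}. F t) = (\<Sum>t<T. F t)" for F :: "nat \<Rightarrow> real"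
    using sum.group[of "{..<T}" K "\<lambda>t. (p t, x t)" F] by (auto simp: K_def cls_def finK)
  have feas: "feas y"
    unfolding feas_def
  proof (intro conjI ballI allI impI)
    fix r j show "0 \<le> y r j" by (auto simp: y_def intro!: sum_nonneg)
  next
    fix r assume r: "r \<in> K"
    have "(\<Sum>j<k. y r j) = (\<Sum>t\<in>{t. t<T \<and> (p t, x t) = r}. \<Sum>j<k. \<Sum>\<alpha>\<in>{\<alpha>\<in>V. g \<alpha> = j}. pmf (D t) \<alpha>)"
      unfolding y_def by (rule sum.swap)
    also have "\<dots> = (\<Sum>t\<in>{t. t<T \<and> (p t, x t) = r}. 1)"
      by (intro sum.cong refl) (simp add: G1 sum_pmf_eq_1 finV suppV)
    also have "\<dots> = real (n r)" by (simp add: n_def cls_def)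
    finally show "(\<Sum>j<k. y r j) = real (n r)" .
  next
    fix j assume j: "j < k"
    have "(\<Sum>r\<in>K. (snd r - \<beta> j) * y r j) = (\<Sum>r\<in>K. \<Sum>t\<in>{t. t<T \<and> (p t, x t) = r}. (x t - \<beta> j) * (\<Sum>\<alpha>\<in>{\<alpha>\<in>V. g \<alpha> = j}. pmf (D t) \<alpha>))"
      unfolding y_def by (intro sum.cong refl) (auto simp: sum_distrib_left)
    also have "\<dots> = (\<Sum>t<T. (x t - \<beta> j) * (\<Sum>\<alpha>\<in>{\<alpha>\<in>V. g \<alpha> = j}. pmf (D t) \<alpha>))" by (rule G2)
    also have "\<dots> = (\<Sum>\<alpha>\<in>{\<alpha>\<in>V. g \<alpha> = j}. (\<Sum>t<T. (x t - \<alpha>) * pmf (D t) \<alpha>) + (\<Sum>t<T. (\<alpha> - \<beta> j) * pmf (D t) \<alpha>))"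
      by (simp add: sum_distrib_left sum.distrib[symmetric] algebra_simps) (subst sum.swap, simp)
    also have "\<dots> = (\<Sum>\<alpha>\<in>{\<alpha>\<in>V. g \<alpha> = j}. (\<Sum>t<T. \<alpha> * pmf (D t) \<alpha>) - \<beta> j * (\<Sum>t<T. pmf (D t) \<alpha>))"
    proof (intro sum.cong refl)
      fix \<alpha>
      have "(\<Sum>t<T. (\<alpha> - \<beta> j) * pmf (D t) \<alpha>) = (\<Sum>t<T. \<alpha> * pmf (D t) \<alpha>) - \<beta> j * (\<Sum>t<T. pmf (D t) \<alpha>)"
        by (simp add: left_diff_distrib sum_subtractf sum_distrib_left mult.assoc)
      then show "(\<Sum>t<T. (x t - \<alpha>) * pmf (D t) \<alpha>) + (\<Sum>t<T. (\<alpha> - \<beta> j) * pmf (D t) \<alpha>) = (\<Sum>t<T. \<alpha> * pmf (D t) \<alpha>) - \<beta> j * (\<Sum>t<T. pmf (D t) \<alpha>)"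
        using cal[of \<alpha>] by simp
    qed
    also have "\<dots> = num j - \<beta> j * w j"
      unfolding num_def w_def by (simp add: sum_subtractf sum_distrib_left) (subst (1 2) sum.swap, simp)
    also have "\<dots> = 0"
      using numw[of j] by (cases "w j = 0") (auto simp: \<beta>_def)
    finally show "(\<Sum>r\<in>K. (snd r - \<beta> j) * y r j) = 0" .
  qed
  have "cost y = (\<Sum>r\<in>K. \<Sum>t\<in>{t. t<T \<and> (p t, x t) = r}. \<Sum>j<k. \<Sum>\<alpha>\<in>{\<alpha>\<in>V. g \<alpha> = j}. pmf (D t) \<alpha> * \<bar>p t - \<beta> j\<bar>)"
  proof -
    have "cost y = (\<Sum>r\<in>K. \<Sum>j<k. \<Sum>t\<in>{t. t<T \<and> (p t, x t) = r}. \<Sum>\<alpha>\<in>{\<alpha>\<in>V. g \<alpha> = j}. pmf (D t) \<alpha> * \<bar>p t - \<beta> j\<bar>)"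
      unfolding cost_def y_def
    proof (intro sum.cong refl)
      fix r j
      have "(\<Sum>t\<in>{t. t<T \<and> (p t, x t) = r}. \<Sum>\<alpha>\<in>{\<alpha>\<in>V. g \<alpha> = j}. pmf (D t) \<alpha>) * \<bar>fst r - \<beta> j\<bar>
          = (\<Sum>t\<in>{t. t<T \<and> (p t, x t) = r}. \<Sum>\<alpha>\<in>{\<alpha>\<in>V. g \<alpha> = j}. pmf (D t) \<alpha> * \<bar>fst r - \<beta> j\<bar>)"
        by (simp add: sum_distrib_right)
      also have "\<dots> = (\<Sum>t\<in>{t. t<T \<and> (p t, x t) = r}. \<Sum>\<alpha>\<in>{\<alpha>\<in>V. g \<alpha> = j}. pmf (D t) \<alpha> * \<bar>p t - \<beta> j\<bar>)"
        by (intro sum.cong refl) auto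
      finally show "(\<Sum>t\<in>{t. t<T \<and> (p t, x t) = r}. \<Sum>\<alpha>\<in>{\<alpha>\<in>V. g \<alpha> = j}. pmf (D t) \<alpha>) * \<bar>fst r - \<beta> j\<bar>
          = (\<Sum>t\<in>{t. t<T \<and> (p t, x t) = r}. \<Sum>\<alpha>\<in>{\<alpha>\<in>V. g \<alpha> = j}. pmf (D t) \<alpha> * \<bar>p t - \<beta> j\<bar>)" .
    qed
    then show ?thesis by (simp only: sum.swap[of _ "{..<k}"])
  qed
  also have "\<dots> = (\<Sum>t<T. \<Sum>j<k. \<Sum>\<alpha>\<in>{\<alpha>\<in>V. g \<alpha> = j}. pmf (D t) \<alpha> * \<bar>p t - \<beta> (g \<alpha>)\<bar>)"
    by (subst G2) (intro sum.cong refl, auto)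
  also have "\<dots> = (\<Sum>t<T. \<Sum>\<alpha>\<in>V. pmf (D t) \<alpha> * \<bar>p t - \<beta> (g \<alpha>)\<bar>)"
    by (intro sum.cong refl G1)
  also have "\<dots> \<le> (\<Sum>t<T. \<Sum>\<alpha>\<in>V. pmf (D t) \<alpha> * \<bar>p t - \<alpha>\<bar> + pmf (D t) \<alpha> * \<bar>\<alpha> - \<beta> (g \<alpha>)\<bar>)"
  proof (intro sum_mono)
    fix t \<alpha>
    have "\<bar>p t - \<beta> (g \<alpha>)\<bar> \<le> \<bar>p t - \<alpha>\<bar> + \<bar>\<alpha> - \<beta> (g \<alpha>)\<bar>" by linarith
    then show "pmf (D t) \<alpha> * \<bar>p t - \<beta> (g \<alpha>)\<bar> \<le> pmf (D t) \<alpha> * \<bar>p t - \<alpha>\<bar> + pmf (D t) \<alpha> * \<bar>\<alpha> - \<beta> (g \<alpha>)\<bar>"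
      by (metis distrib_left mult_left_mono pmf_nonneg)
  qed
  also have "\<dots> = l1_dist_dist T p D + (\<Sum>t<T. \<Sum>\<alpha>\<in>V. pmf (D t) \<alpha> * \<bar>\<alpha> - \<beta> (g \<alpha>)\<bar>)"
  proof -
    have "(\<Sum>t<T. measure_pmf.expectation (D t) (\<lambda>q. \<bar>p t - q\<bar>)) = (\<Sum>t<T. \<Sum>\<alpha>\<in>V. pmf (D t) \<alpha> * \<bar>p t - \<alpha>\<bar>)"
      by (intro sum.cong refl expect_fin finV suppV) simp
    then show ?thesis unfolding l1_dist_dist_def by (simp add: sum.distrib)
  qed
  finally show ?thesis using b01 feas by simp
qed

lemma CalDist_le:
  assumes "q \<in> calibrated_set T x"
  shows "CalDist T x p \<le> l1_dist T p q"
  unfolding CalDist_def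
  by (rule cINF_lower[OF _ assms]) (auto simp: bdd_below_def l1_dist_def intro!: exI[of _ 0] sum_nonneg)

lemma bound1:
  assumes bin: "binary_vec T x" and unit: "unit_vec T p" and D: "D \<in> lower_calibrated_set T x" and T: "T > 0"
  shows "CalDist T x p \<le> l1_dist_dist T p D + 13 * sqrt (real T)"
proof -
  define V where "V = (\<Union>t<T. set_pmf (D t))"
  have finV: "finite V" using D by (auto simp: lower_calibrated_set_def V_def)
  have V01: "V \<subseteq> {0..1}" using D by (auto simp: lower_calibrated_set_def V_def)
  define M :: nat where "M = nat \<lceil>sqrt (real T)\<rceil>"
  have sT1: "sqrt (real T) \<ge> 1" using T by simp
  have Mge: "real M \<ge> sqrt (real T)" unfolding M_def by linarith
  have Mlt: "real M < sqrt (real T) + 1"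
  proof -
    have "sqrt (real T) \<ge> 0" by simp
    then have "\<lceil>sqrt (real T)\<rceil> \<ge> 0" by linarith
    then have "real M = of_int \<lceil>sqrt (real T)\<rceil>" unfolding M_def by simp
    then show ?thesis using ceiling_correct[of "sqrt (real T)"] by linarith
  qed
  have Mpos: "real M > 0" using Mge sT1 by linarith
  define g :: "real \<Rightarrow> nat" where "g = (\<lambda>\<alpha>. nat \<lfloor>\<alpha> * real M\<rfloor>)"
  have cell: "real (g \<alpha>) \<le> \<alpha> * M \<and> \<alpha> * M < real (g \<alpha>) + 1" if "\<alpha> \<in> {0..1}" for \<alpha>
  proof -
    have "\<alpha> * M \<ge> 0" using that Mpos by simp
    then show ?thesis unfolding g_def by linarith
  qed
  have gk: "\<forall>\<alpha>\<in>V. g \<alpha> < M + 1"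
  proof
    fix \<alpha> assume "\<alpha> \<in> V"
    then have a: "\<alpha> \<in> {0..1}" using V01 by auto
    then have "\<alpha> * M \<le> M" using Mpos by (simp add: mult_left_le_one_le)
    then have "real (g \<alpha>) \<le> real M" using cell[OF a] by linarith
    then show "g \<alpha> < M + 1" by simp
  qed
  define w where "w \<equiv> \<lambda>j. \<Sum>t<T. \<Sum>\<alpha>\<in>{\<alpha>\<in>V. g \<alpha> = j}. pmf (D t) \<alpha>"
  define num where "num \<equiv> \<lambda>j. \<Sum>t<T. \<Sum>\<alpha>\<in>{\<alpha>\<in>V. g \<alpha> = j}. \<alpha> * pmf (D t) \<alpha>"
  define \<beta> where "\<beta> \<equiv> \<lambda>j. if w j = 0 then 0 else num j / w j"
  define y where "y \<equiv> \<lambda>r j. \<Sum>t\<in>{t. t<T \<and> (p t, x t) = r}. \<Sum>\<alpha>\<in>{\<alpha>\<in>V. g \<alpha> = j}. pmf (D t) \<alpha>"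
  have mg: "(\<forall>j. \<beta> j \<in> {0..1}) \<and> core.feas T x p (M+1) \<beta> y \<and>
     core.cost T x p (M+1) \<beta> y \<le> l1_dist_dist T p D + (\<Sum>t<T. \<Sum>\<alpha>\<in>V. pmf (D t) \<alpha> * \<bar>\<alpha> - \<beta> (g \<alpha>)\<bar>)"
    unfolding \<beta>_def w_def num_def y_def by (rule merge[OF bin unit D V_def gk])
  interpret core T x p "M+1" \<beta> using bin unit mg by unfold_locales auto
  have err: "pmf (D t) \<alpha> * \<bar>\<alpha> - \<beta> (g \<alpha>)\<bar> \<le> pmf (D t) \<alpha> / M" if t: "t < T" and a: "\<alpha> \<in> V" for t \<alpha>
  proof (cases "pmf (D t) \<alpha> = 0")
    case True then show ?thesis by simp
  next
    case False
    let ?j = "g \<alpha>"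
    have inc: "real ?j / M \<le> \<alpha>' \<and> \<alpha>' \<le> (real ?j + 1) / M" if "\<alpha>' \<in> {\<alpha>\<in>V. g \<alpha> = ?j}" for \<alpha>'
      using cell[of \<alpha>'] that V01 Mpos by (auto simp: field_simps)
    have "w ?j \<ge> pmf (D t) \<alpha>"
    proof -
      have "pmf (D t) \<alpha> \<le> (\<Sum>\<alpha>'\<in>{\<alpha>'\<in>V. g \<alpha>' = ?j}. pmf (D t) \<alpha>')"
        using a finV by (intro member_le_sum) auto
      also have "\<dots> \<le> w ?j" unfolding w_def using t
        by (intro member_le_sum[where f="\<lambda>t. \<Sum>\<alpha>'\<in>{\<alpha>'\<in>V. g \<alpha>' = ?j}. pmf (D t) \<alpha>'"]) (auto intro: sum_nonneg)
      finally show ?thesis .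
    qed
    then have wpos: "w ?j > 0" using False pmf_nonneg[of "D t" \<alpha>] by linarith
    have lo: "real ?j / M * pmf (D t') \<alpha>' \<le> \<alpha>' * pmf (D t') \<alpha>'" if "\<alpha>' \<in> {\<alpha>\<in>V. g \<alpha> = ?j}" for t' \<alpha>'
      using inc[OF that] by (intro mult_right_mono) auto
    have hi: "\<alpha>' * pmf (D t') \<alpha>' \<le> (real ?j + 1) / M * pmf (D t') \<alpha>'" if "\<alpha>' \<in> {\<alpha>\<in>V. g \<alpha> = ?j}" for t' \<alpha>'
      using inc[OF that] by (intro mult_right_mono) auto
    have "real ?j / M * w ?j \<le> num ?j"
      unfolding w_def num_def sum_distrib_left
      by (intro sum_mono) (erule lo)
    moreover have "num ?j \<le> (real ?j + 1) / M * w ?j"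
      unfolding w_def num_def sum_distrib_left
      by (intro sum_mono) (erule hi)
    ultimately have "real ?j / M \<le> \<beta> ?j \<and> \<beta> ?j \<le> (real ?j + 1) / M"
      using wpos by (simp add: \<beta>_def field_simps)
    moreover have "real ?j / M \<le> \<alpha> \<and> \<alpha> \<le> (real ?j + 1) / M" using inc a by auto
    ultimately have "\<bar>\<alpha> - \<beta> ?j\<bar> \<le> 1 / M" by (simp add: abs_le_iff add_divide_distrib)
    then show ?thesis using pmf_nonneg[of "D t" \<alpha>]
      by (metis mult_left_mono times_divide_eq_right mult_1_right)
  qed
  have "(\<Sum>t<T. \<Sum>\<alpha>\<in>V. pmf (D t) \<alpha> * \<bar>\<alpha> - \<beta> (g \<alpha>)\<bar>) \<le> (\<Sum>t<T. \<Sum>\<alpha>\<in>V. pmf (D t) \<alpha> / M)"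
    by (intro sum_mono err) auto
  also have "\<dots> = (\<Sum>t<T. 1 / M)"
  proof (intro sum.cong refl)
    fix t assume "t \<in> {..<T}"
    then have "set_pmf (D t) \<subseteq> V" by (auto simp: V_def)
    then show "(\<Sum>\<alpha>\<in>V. pmf (D t) \<alpha> / M) = 1 / M"
      using sum_pmf_eq_1[OF finV] by (simp add: sum_divide_distrib[symmetric])
  qed
  also have "\<dots> = real T / M" by simp
  also have "\<dots> \<le> sqrt (real T)"
  proof -
    have "real T = sqrt (real T) * sqrt (real T)" by simp
    also have "\<dots> \<le> sqrt (real T) * M" using Mge by (intro mult_left_mono) auto
    finally show ?thesis using Mpos by (simp add: divide_le_eq)
  qed
  finally have E: "(\<Sum>t<T. \<Sum>\<alpha>\<in>V. pmf (D t) \<alpha> * \<bar>\<alpha> - \<beta> (g \<alpha>)\<bar>) \<le> sqrt (real T)" .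
  obtain q where q: "q \<in> calibrated_set T x" "l1_dist T p q \<le> cost y + 4 * real (M + 1)"
    using rounding[of y] mg by blast
  have "CalDist T x p \<le> l1_dist T p q" by (rule CalDist_le[OF q(1)])
  also have "\<dots> \<le> l1_dist_dist T p D + sqrt (real T) + 4 * (real M + 1)" using q(2) mg E by simp
  also have "\<dots> \<le> l1_dist_dist T p D + 13 * sqrt (real T)" using Mlt sT1 by (smt (verit))
  finally show ?thesis .
qed

lemma bound2:
  assumes bin: "binary_vec T x" and unit: "unit_vec T p" and D: "D \<in> lower_calibrated_set T x" and T: "T > 0"
  shows "CalDist T x p \<le> l1_dist_dist T p D + 16 * real (card (p ` {..<T}))"
proof -
  define V where "V = (\<Union>t<T. set_pmf (D t))"
  have finV: "finite V" using D by (auto simp: lower_calibrated_set_def V_def)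
  define k where "k = card V"
  obtain e where e: "bij_betw e {0..<k} V" using ex_bij_betw_nat_finite[OF finV] unfolding k_def by blast
  define g where "g = inv_into {0..<k} e"
  have ginv: "g \<alpha> \<in> {0..<k} \<and> e (g \<alpha>) = \<alpha>" if "\<alpha> \<in> V" for \<alpha>
    using that e unfolding g_def
    by (meson bij_betw_apply bij_betw_inv_into bij_betw_inv_into_right)
  have geq: "g \<alpha>' = g \<alpha> \<longleftrightarrow> \<alpha>' = \<alpha>" if "\<alpha> \<in> V" "\<alpha>' \<in> V" for \<alpha> \<alpha>'
    using ginv that by metis
  have gk: "\<forall>\<alpha>\<in>V. g \<alpha> < k" using ginv by auto
  define w where "w \<equiv> \<lambda>j. \<Sum>t<T. \<Sum>\<alpha>\<in>{\<alpha>\<in>V. g \<alpha> = j}. pmf (D t) \<alpha>"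
  define num where "num \<equiv> \<lambda>j. \<Sum>t<T. \<Sum>\<alpha>\<in>{\<alpha>\<in>V. g \<alpha> = j}. \<alpha> * pmf (D t) \<alpha>"
  define \<beta> where "\<beta> \<equiv> \<lambda>j. if w j = 0 then 0 else num j / w j"
  define y where "y \<equiv> \<lambda>r j. \<Sum>t\<in>{t. t<T \<and> (p t, x t) = r}. \<Sum>\<alpha>\<in>{\<alpha>\<in>V. g \<alpha> = j}. pmf (D t) \<alpha>"
  have mg: "(\<forall>j. \<beta> j \<in> {0..1}) \<and> core.feas T x p k \<beta> y \<and>
     core.cost T x p k \<beta> y \<le> l1_dist_dist T p D + (\<Sum>t<T. \<Sum>\<alpha>\<in>V. pmf (D t) \<alpha> * \<bar>\<alpha> - \<beta> (g \<alpha>)\<bar>)"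
    unfolding \<beta>_def w_def num_def y_def by (rule merge[OF bin unit D V_def gk])
  interpret core T x p k \<beta> using bin unit mg by unfold_locales auto
  have \<beta>g: "\<beta> (g \<alpha>) = \<alpha>" if a: "\<alpha> \<in> V" for \<alpha>
  proof -
    have cell: "{\<alpha>'\<in>V. g \<alpha>' = g \<alpha>} = {\<alpha>}" using geq[OF a] a by auto
    have wa: "w (g \<alpha>) = (\<Sum>t<T. pmf (D t) \<alpha>)" unfolding w_def cell by simp
    have na: "num (g \<alpha>) = \<alpha> * w (g \<alpha>)" unfolding wa num_def cell by (simp add: sum_distrib_left)
    obtain t where t: "t < T" "\<alpha> \<in> set_pmf (D t)" using a by (auto simp: V_def)
    have "pmf (D t) \<alpha> \<le> (\<Sum>t<T. pmf (D t) \<alpha>)"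
      using t by (intro member_le_sum) auto
    moreover have "pmf (D t) \<alpha> > 0" using t by (simp add: pmf_positive)
    ultimately have "w (g \<alpha>) > 0" using wa by linarith
    then show ?thesis using na by (simp add: \<beta>_def)
  qed
  have injb: "inj_on \<beta> {..<k}"
  proof (rule inj_onI)
    fix i j assume i: "i \<in> {..<k}" and j: "j \<in> {..<k}" and eq: "\<beta> i = \<beta> j"
    have ei: "e i \<in> V" "e j \<in> V" using e i j by (auto simp: bij_betw_def)
    have "g (e i) = i" "g (e j) = j" using e i j unfolding g_def
      by (auto simp: bij_betw_def inv_into_f_f)
    then have "\<beta> i = e i" "\<beta> j = e j" using \<beta>g[OF ei(1)] \<beta>g[OF ei(2)] by auto
    then have "e i = e j" using eq by simp
    then show "i = j" using e i j by (auto simp: bij_betw_def inj_on_def)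
  qed
  have E: "(\<Sum>t<T. \<Sum>\<alpha>\<in>V. pmf (D t) \<alpha> * \<bar>\<alpha> - \<beta> (g \<alpha>)\<bar>) = 0"
    using \<beta>g by simp
  obtain q where q: "q \<in> calibrated_set T x" "l1_dist T p q \<le> cost y + 4 * (real (card K) + 2)"
    using rounding[of y] mg injb by blast
  define m where "m = card (p ` {..<T})"
  have "K \<subseteq> (p ` {..<T}) \<times> {0,1}" using bin by (auto simp: K_def cls_def binary_vec_def)
  then have "card K \<le> card ((p ` {..<T}) \<times> {0::real,1})" by (intro card_mono) auto
  also have "\<dots> = 2 * m" by (simp add: card_cartesian_product m_def)
  finally have cK: "real (card K) \<le> 2 * real m" by linarith
  have "m \<ge> 1" using T unfolding m_def by (simp add: Suc_le_eq card_gt_0_iff lessThan_empty_iff)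
  then have m1: "real m \<ge> 1" by simp
  have "CalDist T x p \<le> l1_dist T p q" by (rule CalDist_le[OF q(1)])
  also have "\<dots> \<le> l1_dist_dist T p D + 4 * (real (card K) + 2)" using q(2) mg E by simp
  also have "\<dots> \<le> l1_dist_dist T p D + 16 * real m" using cK m1 by (smt (verit))
  finally show ?thesis by (simp add: m_def)
qed

lemma lower_nonempty: "(\<lambda>t. return_pmf (x t)) \<in> lower_calibrated_set T x" if "binary_vec T x"
proof -
  have "(\<Sum>t<T. (x t - \<alpha>) * pmf (return_pmf (x t)) \<alpha>) = 0" for \<alpha>
    by (intro sum.neutral) (auto simp: pmf_return split: split_indicator)
  then show ?thesis using that by (auto simp: lower_calibrated_set_def binary_vec_def)
qed

lemma l1dd_nonneg: "l1_dist_dist T p D \<ge> 0"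
  unfolding l1_dist_dist_def by (intro sum_nonneg integral_nonneg_AE) auto

lemma via_inf:
  assumes "binary_vec T x" and "\<And>D. D \<in> lower_calibrated_set T x \<Longrightarrow> CalDist T x p \<le> l1_dist_dist T p D + E"
  shows "CalDist T x p \<le> LowerCalDist T x p + E"
proof -
  have "CalDist T x p - E \<le> LowerCalDist T x p"
    unfolding LowerCalDist_def
    using lower_nonempty[OF assms(1)] assms(2) by (intro cINF_greatest) (auto simp: algebra_simps)
  then show ?thesis by simp
qed

lemma LCD_nonneg: assumes "binary_vec T x" shows "LowerCalDist T x p \<ge> 0"
proof -
  have "lower_calibrated_set T x \<noteq> {}" using lower_nonempty[OF assms] by blast
  then show ?thesis unfolding LowerCalDist_def using l1dd_nonneg by (intro cINF_greatest) auto
qed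

theorem theorem2:
  "\<exists>C::real. C > 0 \<and>
     (\<forall>T::nat. \<forall>x p. T > 0 \<longrightarrow> binary_vec T x \<longrightarrow> unit_vec T p \<longrightarrow>
        CalDist T x p \<le> LowerCalDist T x p + C * sqrt (real T) \<and>
        CalDist T x p \<le> C * LowerCalDist T x p + C * real (card (p ` {..<T})))"
proof (intro exI[of _ 16] conjI allI impI)
  fix T :: nat and x p assume T: "T > 0" and bin: "binary_vec T x" and unit: "unit_vec T p"
  have "CalDist T x p \<le> LowerCalDist T x p + 13 * sqrt (real T)"
    using via_inf[OF bin] bound1[OF bin unit _ T] by blast
  moreover have "sqrt (real T) \<ge> 0" by simp
  ultimately show "CalDist T x p \<le> LowerCalDist T x p + 16 * sqrt (real T)" by linarith
  have "CalDist T x p \<le> LowerCalDist T x p + 16 * real (card (p ` {..<T}))"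
    using via_inf[OF bin] bound2[OF bin unit _ T] by blast
  moreover have "LowerCalDist T x p \<le> 16 * LowerCalDist T x p" using LCD_nonneg[OF bin] by simp
  ultimately show "CalDist T x p \<le> 16 * LowerCalDist T x p + 16 * real (card (p ` {..<T}))" by simp
qed simp

end
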